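(* $$\lim_{p\downarrow0}\ \limsup_{n\to\infty}\frac{H_n(p)}{n}=0\quad\text{a.s.}$$
   Context: Bernoulli hail graph $\mathcal G(p)$, $p\in(0,1]$: nodes are pairs $(i,n)$, $i\in\mathbb Z$, $n\in\{1,2,\dots\}$. First define $\mathcal G(1)$: for each $n$ and $i$, independently, there is either an edge $(i,n)\to(i+1,n)$ or an edge $(i+1,n)\to(i,n)$, each with probability $1/2$ (spatial edges); for all $i$ and $n\ge2$ there are edges $(i,n)\to(i-1,n-1)$, $(i,n)\to(i,n-1)$, $(i,n)\to(i+1,n-1)$ (time edges). $\mathcal G(p)$ is obtained by coloring each node black with probability $p$ and white with probability $1-p$, independently of everything else; for each white node, its outgoing spatial edges are deleted and its time edges to $(i\pm1,n-1)$ are deleted (only $(i,n)\to(i,n-1)$ is kept). The graphs for different $p$ are naturally coupled (e.g. via uniform variables for the colors) so that $\mathcal G(p)\subseteq\mathcal G(q)$ for $p\le q$. A path is a sequence of nodes joined by directed edges present in $\mathcal G(p)$. The height of a black node is $1$, of a white node $0$; the height of a path is the sum of heights of its nodes. $H^i_n=H^i_n(p)$ is the maximal height of all paths of $\mathcal G(p)$ starting from $(i,n)$; its law does not depend on $i$ and we write $H_n=H_n(p)$. *)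

theory Defs
  imports "HOL-Probability.Probability"
begin

type_synonym node = "int \<times> nat"
type_synonym env = "node \<Rightarrow> real \<times> bool"

text \<open>Randomness: each node (i,n) carries an independent pair (U, D), where U is uniform on [0,1]
 (colour: black in G(p) iff U \<le> p) and D is a fair coin (True: spatial edge (i,n)->(i+1,n),
 False: spatial edge (i+1,n)->(i,n)). Nodes with n = 0 carry unused variables.\<close>
definition hail_space :: "env measure" where
  "hail_space = PiM UNIV (\<lambda>_. uniform_measure lborel {0..1::real} \<Otimes>\<^sub>M measure_pmf (bernoulli_pmf (1/2)))"

definition black :: "real \<Rightarrow> env \<Rightarrow> node \<Rightarrow> bool" where
  "black p \<omega> x \<longleftrightarrow> fst (\<omega> x) \<le> p"

definition hail_edge :: "real \<Rightarrow> env \<Rightarrow> node \<Rightarrow> node \<Rightarrow> bool" where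
  "hail_edge p \<omega> x y \<longleftrightarrow> snd x \<ge> 1 \<and> snd y \<ge> 1 \<and>
     ((black p \<omega> x \<and> y = (fst x + 1, snd x) \<and> snd (\<omega> x)) \<or>
      (black p \<omega> x \<and> y = (fst x - 1, snd x) \<and> \<not> snd (\<omega> y)) \<or>
      (snd x \<ge> 2 \<and> y = (fst x, snd x - 1)) \<or>
      (black p \<omega> x \<and> snd x \<ge> 2 \<and> (y = (fst x - 1, snd x - 1) \<or> y = (fst x + 1, snd x - 1))))"

definition hail_path :: "real \<Rightarrow> env \<Rightarrow> node list \<Rightarrow> bool" where
  "hail_path p \<omega> xs \<longleftrightarrow> xs \<noteq> [] \<and> (\<forall>k. Suc k < length xs \<longrightarrow> hail_edge p \<omega> (xs ! k) (xs ! Suc k))"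

definition path_height :: "real \<Rightarrow> env \<Rightarrow> node list \<Rightarrow> nat" where
  "path_height p \<omega> xs = length (filter (black p \<omega>) xs)"

definition Hmax :: "real \<Rightarrow> env \<Rightarrow> node \<Rightarrow> enat" where
  "Hmax p \<omega> x = (SUP xs \<in> {xs. hail_path p \<omega> xs \<and> xs ! 0 = x}. enat (path_height p \<omega> xs))"

definition Hn :: "real \<Rightarrow> env \<Rightarrow> nat \<Rightarrow> enat" where
  "Hn p \<omega> n = Hmax p \<omega> (0, n)"

end

theory Submission
  imports Defs
begin

abbreviation "Mi \<equiv> uniform_measure lborel {0..1::real} \<Otimes>\<^sub>M measure_pmf (bernoulli_pmf (1/2))"

lemma prob_Mi: "prob_space Mi"
proof -
  have "prob_space (uniform_measure lborel {0..1::real})"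
    by (rule prob_space_uniform_measure) auto
  then show ?thesis
    by (intro prob_space_pair) (auto simp: prob_space_measure_pmf)
qed

lemma prob_hail: "prob_space hail_space"
  unfolding hail_space_def by (rule prob_space_PiM) (rule prob_Mi)

lemma space_hail: "space hail_space = UNIV"
  unfolding hail_space_def space_PiM by (auto simp: space_pair_measure PiE_def extensional_def)

lemma emeasure_Mi: assumes "0 \<le> p" "p \<le> 1"
  shows "emeasure Mi ({..p} \<times> UNIV) = ennreal p"
proof -
  have "emeasure Mi ({..p} \<times> UNIV) = emeasure (uniform_measure lborel {0..1::real}) {..p} * emeasure (measure_pmf (bernoulli_pmf (1/2))) UNIV"
    by (subst measure_pmf.emeasure_pair_measure_Times) auto
  also have "\<dots> = ennreal p" using assms
    by (simp add: measure_pmf.emeasure_space_1[simplified] Int_commute divide_ennreal_def)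
  finally show ?thesis .
qed

definition cyl :: "real \<Rightarrow> node set \<Rightarrow> env set" where
  "cyl p T = {\<omega>. \<forall>x\<in>T. fst (\<omega> x) \<le> p}"

lemma cyl_emb: "cyl p T = prod_emb UNIV (\<lambda>_. Mi) T (PiE T (\<lambda>_. {..p} \<times> UNIV))"
  unfolding cyl_def prod_emb_def by (auto simp: space_pair_measure PiE_def extensional_def Pi_def mem_Times_iff)

lemma cyl_sets: "finite T \<Longrightarrow> cyl p T \<in> sets hail_space"
  unfolding cyl_emb hail_space_def
  by (rule sets_PiM_I) auto

lemma cyl_measure: assumes "finite T" "0 \<le> p" "p \<le> 1"
  shows "measure hail_space (cyl p T) = p ^ card T"
proof -
  have "emeasure hail_space (cyl p T) = (\<Prod>i\<in>T. emeasure Mi ({..p} \<times> UNIV))"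
    unfolding cyl_emb hail_space_def
    by (rule emeasure_PiM_emb) (use assms prob_Mi in auto)
  also have "\<dots> = ennreal (p ^ card T)" using assms by (simp add: emeasure_Mi ennreal_power)
  finally show ?thesis using assms by (simp add: measure_def)
qed

lemma edge_cases:
  assumes "hail_edge p \<omega> x y"
  shows "snd y < snd x \<or> (y = (fst x + 1, snd x) \<and> snd (\<omega> x)) \<or> (y = (fst x - 1, snd x) \<and> \<not> snd (\<omega> y))"
  using assms unfolding hail_edge_def by auto

lemma edge_snd: "hail_edge p \<omega> x y \<Longrightarrow> snd y \<ge> 1 \<and> snd x \<ge> 1"
  unfolding hail_edge_def by auto

lemma path_edge: "hail_path p \<omega> xs \<Longrightarrow> Suc k < length xs \<Longrightarrow> hail_edge p \<omega> (xs!k) (xs!Suc k)"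
  unfolding hail_path_def by auto

lemma path_distinct_aux:
  assumes P: "hail_path p \<omega> xs"
  shows "i + Suc d < length xs \<Longrightarrow>
    (let j = i + Suc d in snd (xs!j) < snd (xs!i) \<or> (snd (xs!j) = snd (xs!i) \<and>
      ((fst (xs!j) = fst (xs!i) + int (Suc d) \<and> xs!j = (fst (xs!(j-1)) + 1, snd (xs!(j-1)))) \<or>
       (fst (xs!j) = fst (xs!i) - int (Suc d) \<and> xs!j = (fst (xs!(j-1)) - 1, snd (xs!(j-1)))))))"
proof (induction d)
  case 0
  have "hail_edge p \<omega> (xs!i) (xs!Suc i)" using path_edge[OF P] 0 by auto
  from edge_cases[OF this] show ?case by (auto simp: Let_def)
next
  case (Suc d)
  define j where "j = i + Suc d"
  have jl: "Suc j < length xs" using Suc.prems j_def by simp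
  have IH: "snd (xs!j) < snd (xs!i) \<or> (snd (xs!j) = snd (xs!i) \<and>
      ((fst (xs!j) = fst (xs!i) + int (Suc d) \<and> xs!j = (fst (xs!(j-1)) + 1, snd (xs!(j-1)))) \<or>
       (fst (xs!j) = fst (xs!i) - int (Suc d) \<and> xs!j = (fst (xs!(j-1)) - 1, snd (xs!(j-1))))))"
    using Suc.IH Suc.prems j_def by (simp add: Let_def)
  have E: "hail_edge p \<omega> (xs!j) (xs!Suc j)" using path_edge[OF P jl] .
  have E0: "hail_edge p \<omega> (xs!(j-1)) (xs!j)" using path_edge[OF P, of "j-1"] jl j_def by simp
  have goal: "snd (xs!Suc j) < snd (xs!i) \<or> (snd (xs!Suc j) = snd (xs!i) \<and>
      ((fst (xs!Suc j) = fst (xs!i) + int (Suc (Suc d)) \<and> xs!Suc j = (fst (xs!j) + 1, snd (xs!j))) \<or>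
       (fst (xs!Suc j) = fst (xs!i) - int (Suc (Suc d)) \<and> xs!Suc j = (fst (xs!j) - 1, snd (xs!j)))))"
  proof -
    from edge_cases[OF E] consider
      (D) "snd (xs!Suc j) < snd (xs!j)"
      | (R) "xs!Suc j = (fst (xs!j) + 1, snd (xs!j))" "snd (\<omega> (xs!j))"
      | (L) "xs!Suc j = (fst (xs!j) - 1, snd (xs!j))" "\<not> snd (\<omega> (xs!Suc j))" by blast
    then show ?thesis
    proof cases
      case D then show ?thesis using IH by auto
    next
      case R
      have "\<not> (snd (xs!j) = snd (xs!i) \<and> xs!j = (fst (xs!(j-1)) - 1, snd (xs!(j-1))))"
      proof
        assume A: "snd (xs!j) = snd (xs!i) \<and> xs!j = (fst (xs!(j-1)) - 1, snd (xs!(j-1)))"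
        have D3: "snd (xs!j) < snd (xs!(j-1)) \<or> xs!j = (fst (xs!(j-1)) + 1, snd (xs!(j-1))) \<or> \<not> snd (\<omega> (xs!j))"
          using edge_cases[OF E0] by blast
        have n1: "\<not> snd (xs!j) < snd (xs!(j-1))" using A by (metis less_irrefl snd_conv)
        have n2: "xs!j \<noteq> (fst (xs!(j-1)) + 1, snd (xs!(j-1)))" using A by simp
        show False using D3 n1 n2 R(2) by blast
      qed
      then show ?thesis using IH R(1) by auto
    next
      case L
      have "\<not> (snd (xs!j) = snd (xs!i) \<and> xs!j = (fst (xs!(j-1)) + 1, snd (xs!(j-1))))"
      proof
        assume A: "snd (xs!j) = snd (xs!i) \<and> xs!j = (fst (xs!(j-1)) + 1, snd (xs!(j-1)))"
        then have eq: "xs!Suc j = xs!(j-1)" using L(1) by (simp add: prod_eq_iff)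
        have D3: "snd (xs!j) < snd (xs!(j-1)) \<or> (xs!j = (fst (xs!(j-1)) + 1, snd (xs!(j-1))) \<and> snd (\<omega> (xs!(j-1)))) \<or> xs!j = (fst (xs!(j-1)) - 1, snd (xs!(j-1)))"
          using edge_cases[OF E0] by blast
        have n1: "\<not> snd (xs!j) < snd (xs!(j-1))" using A by (metis less_irrefl snd_conv)
        have n3: "xs!j \<noteq> (fst (xs!(j-1)) - 1, snd (xs!(j-1)))" using A by simp
        have "snd (\<omega> (xs!(j-1)))" using D3 n1 n3 by blast
        then show False using L(2) eq by simp
      qed
      then show ?thesis using IH L(1) by auto
    qed
  qed
  moreover have jj: "i + Suc (Suc d) = Suc j" by (simp add: j_def)
  ultimately show ?case unfolding Let_def jj by simp
qed

lemma path_distinct: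
  assumes P: "hail_path p \<omega> xs" and "i < j" "j < length xs"
  shows "xs!i \<noteq> xs!j"
proof -
  define d where "d = j - i - 1"
  have d: "j = i + Suc d" using assms(2) unfolding d_def by simp
  have "j < length xs" by fact
  then have H: "snd (xs!j) < snd (xs!i) \<or> (snd (xs!j) = snd (xs!i) \<and>
      ((fst (xs!j) = fst (xs!i) + int (Suc d)) \<or> (fst (xs!j) = fst (xs!i) - int (Suc d))))"
    using path_distinct_aux[OF P, of i d] unfolding Let_def d[symmetric] by blast
  show ?thesis
  proof
    assume e: "xs!i = xs!j"
    have "fst (xs!j) = fst (xs!i)" "snd (xs!j) = snd (xs!i)" using e by simp_all
    then show False using H by linarith
  qed
qed



lemma path_len_aux:
  assumes P: "hail_path p \<omega> xs"
  shows "k < length xs \<Longrightarrow> k + snd (xs!k) \<le> snd (xs!0) + card {i. i < k \<and> black p \<omega> (xs!i)}"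
proof (induction k)
  case 0 then show ?case by simp
next
  case (Suc k)
  have E: "hail_edge p \<omega> (xs!k) (xs!Suc k)" using path_edge[OF P] Suc.prems by auto
  have IH: "k + snd (xs!k) \<le> snd (xs!0) + card {i. i < k \<and> black p \<omega> (xs!i)}" using Suc by simp
  have S: "{i. i < Suc k \<and> black p \<omega> (xs!i)} = {i. i < k \<and> black p \<omega> (xs!i)} \<union> (if black p \<omega> (xs!k) then {k} else {})"
    by (auto simp: less_Suc_eq)
  have C: "card {i. i < Suc k \<and> black p \<omega> (xs!i)} = card {i. i < k \<and> black p \<omega> (xs!i)} + (if black p \<omega> (xs!k) then 1 else 0)"
    unfolding S by (auto)
  have "snd (xs!Suc k) < snd (xs!k) \<or> (black p \<omega> (xs!k) \<and> snd (xs!Suc k) = snd (xs!k))"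
    using E unfolding hail_edge_def by auto
  then show ?case using IH C by (auto split: if_splits)
qed


definition step :: "node \<Rightarrow> nat \<Rightarrow> node" where
  "step x l = (if l = 1 then (fst x + 1, snd x) else if l = 2 then (fst x - 1, snd x)
     else if l = 4 then (fst x - 1, snd x - 1) else if l = 5 then (fst x + 1, snd x - 1)
     else (fst x, snd x - 1))"

definition pos :: "node \<Rightarrow> nat list \<Rightarrow> nat \<Rightarrow> node" where
  "pos s w k = foldl step s (take k w)"

lemma pos_0: "pos s w 0 = s" by (simp add: pos_def)

lemma pos_Suc: "k < length w \<Longrightarrow> pos s w (Suc k) = step (pos s w k) (w!k)"
  by (simp add: pos_def take_Suc_conv_app_nth)

definition letter_of :: "bool \<Rightarrow> node \<Rightarrow> node \<Rightarrow> nat" where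
  "letter_of b x y = (if \<not> b then 0 else if y = (fst x + 1, snd x) then 1
     else if y = (fst x - 1, snd x) then 2 else if y = (fst x, snd x - 1) then 3
     else if y = (fst x - 1, snd x - 1) then 4 else 5)"

lemma letter_of_0: "letter_of b x y = 0 \<longleftrightarrow> \<not> b"
  by (simp add: letter_of_def)

lemma letter_of_pos: "0 < letter_of b x y \<longleftrightarrow> b"
  by (simp add: letter_of_def)

lemma letter_of_le: "letter_of b x y \<le> 5"
  by (simp add: letter_of_def)

lemma step_letter:
  assumes "hail_edge p \<omega> x y"
  shows "step x (letter_of (black p \<omega> x) x y) = y"
  using assms unfolding hail_edge_def letter_of_def step_def
  by (auto simp: prod_eq_iff)

definition Bset :: "nat list \<Rightarrow> nat set" where
  "Bset w = {k. k < length w \<and> w!k \<noteq> 0}"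

definition Words :: "nat \<Rightarrow> nat \<Rightarrow> nat list set" where
  "Words n m = {w. set w \<subseteq> {0..5} \<and> length w \<le> n + m \<and> inj_on (pos (0, n) w) (Bset w) \<and> m \<le> card (Bset w)}"

lemma finite_Words: "finite (Words n m)"
proof -
  have S: "Words n m \<subseteq> {w. set w \<subseteq> {0..5} \<and> length w \<le> n + m}" unfolding Words_def by auto
  have "finite {w. set w \<subseteq> {0..5::nat} \<and> length w \<le> n + m}"
    by (rule finite_lists_length_le) simp
  then show ?thesis using finite_subset[OF S] by blast
qed

lemma card_Words: "card (Words n m) \<le> (n + m + 1) * 6 ^ (n + m)"
proof -
  have S: "Words n m \<subseteq> {w. set w \<subseteq> {0..5} \<and> length w \<le> n + m}" unfolding Words_def by auto
  have F: "finite {w. set w \<subseteq> {0..5::nat} \<and> length w \<le> n + m}"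
    by (rule finite_lists_length_le) simp
  have "card (Words n m) \<le> card {w. set w \<subseteq> {0..5::nat} \<and> length w \<le> n + m}"
    by (rule card_mono[OF F S])
  also have "\<dots> = (\<Sum>i\<le>n+m. 6 ^ i)" by (subst card_lists_length_le) auto
  also have "\<dots> \<le> (\<Sum>i\<le>n+m. 6 ^ (n+m))" by (rule sum_mono) (simp add: power_increasing)
  also have "\<dots> = (n + m + 1) * 6 ^ (n + m)" by simp
  finally show ?thesis .
qed

lemma comb_main:
  assumes P: "hail_path p \<omega> xs" and x0: "xs!0 = (0, n)" and m1: "1 \<le> m"
    and h: "m \<le> path_height p \<omega> xs"
  shows "\<exists>w\<in>Words n m. \<omega> \<in> cyl p (pos (0, n) w ` Bset w)"
proof -
  let ?B = "\<lambda>L. {i. i < L \<and> black p \<omega> (xs!i)}"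
  have hc: "path_height p \<omega> xs = card (?B (length xs))"
    unfolding path_height_def by (simp add: length_filter_conv_card)
  define L where "L = (LEAST L. m \<le> card (?B L))"
  have PL: "m \<le> card (?B L)" unfolding L_def by (rule LeastI[of _ "length xs"]) (use h hc in simp)
  have Lle: "L \<le> length xs" unfolding L_def by (rule Least_le) (use h hc in simp)
  have L1: "L \<ge> 1"
  proof (rule ccontr)
    assume "\<not> L \<ge> 1" then have "L = 0" by simp
    then show False using PL m1 by simp
  qed
  have nPL: "\<not> m \<le> card (?B (L - 1))" unfolding L_def
    by (rule not_less_Least) (use L1 L_def in simp)
  have len0: "0 < length xs" using P unfolding hail_path_def by simp
  have plen: "(L - 1) + snd (xs!(L-1)) \<le> n + card (?B (L - 1))"
    using path_len_aux[OF P, of "L - 1"] Lle L1 x0 by simp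
  have Lb: "L \<le> n + m"
  proof (cases "L = 1")
    case True then show ?thesis using m1 by simp
  next
    case False
    then have "hail_edge p \<omega> (xs!(L-2)) (xs!Suc (L-2))" using path_edge[OF P, of "L-2"] Lle L1 by simp
    then have "snd (xs!(L-1)) \<ge> 1" using edge_snd False L1 by (metis Suc_diff_Suc One_nat_def Suc_1 diff_Suc_1 le_neq_implies_less)
    then show ?thesis using plen nPL by linarith
  qed
  define w where "w = map (\<lambda>k. letter_of (black p \<omega> (xs!k)) (xs!k) (xs!Suc k)) [0..<L]"
  have lw: "length w = L" unfolding w_def by simp
  have wk: "k < L \<Longrightarrow> w!k = letter_of (black p \<omega> (xs!k)) (xs!k) (xs!Suc k)" for k
    unfolding w_def by simp
  have posk: "k < L \<Longrightarrow> pos (0, n) w k = xs!k" for k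
  proof (induction k)
    case 0 then show ?case using x0 by (simp add: pos_0)
  next
    case (Suc k)
    have "pos (0, n) w (Suc k) = step (xs!k) (w!k)" using Suc lw by (simp add: pos_Suc)
    also have "\<dots> = xs!Suc k" using Suc.prems Lle wk[of k] step_letter[OF path_edge[OF P, of k]] by simp
    finally show ?case .
  qed
  have BS: "Bset w = ?B L" unfolding Bset_def using lw wk by (auto simp: letter_of_0 letter_of_pos)
  have "w \<in> Words n m"
    unfolding Words_def
  proof (intro CollectI conjI)
    show "set w \<subseteq> {0..5}" by (auto simp: w_def letter_of_def)
    show "length w \<le> n + m" using lw Lb by simp
    show "m \<le> card (Bset w)" using BS PL by simp
    show "inj_on (pos (0, n) w) (Bset w)"
    proof (rule inj_onI)
      fix a b assume a: "a \<in> Bset w" and b: "b \<in> Bset w" and e: "pos (0, n) w a = pos (0, n) w b"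
      then have ab: "a < L" "b < L" using BS by auto
      then have e2: "xs!a = xs!b" using e posk by simp
      show "a = b"
      proof (rule ccontr)
        assume "a \<noteq> b"
        then consider "a < b" | "b < a" by linarith
        then show False
          using path_distinct[OF P, of a b] path_distinct[OF P, of b a] e2 ab Lle by (cases) auto
      qed
    qed
  qed
  moreover have "\<omega> \<in> cyl p (pos (0, n) w ` Bset w)"
    unfolding cyl_def using BS posk by (auto simp: black_def)
  ultimately show ?thesis by blast
qed

lemma Hn_le:
  assumes m1: "1 \<le> m" and nA: "\<omega> \<notin> (\<Union>w\<in>Words n m. cyl p (pos (0, n) w ` Bset w))"
  shows "Hn p \<omega> n \<le> enat (m - 1)"
  unfolding Hn_def Hmax_def
proof (rule SUP_least)
  fix xs assume xs: "xs \<in> {xs. hail_path p \<omega> xs \<and> xs ! 0 = (0, n)}"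
  have "\<not> m \<le> path_height p \<omega> xs"
  proof
    assume "m \<le> path_height p \<omega> xs"
    then show False using comb_main[of p \<omega> xs n m] xs m1 nA by auto
  qed
  then show "enat (path_height p \<omega> xs) \<le> enat (m - 1)" by simp
qed

definition Aev :: "real \<Rightarrow> nat \<Rightarrow> nat \<Rightarrow> env set" where
  "Aev p n m = (\<Union>w\<in>Words n m. cyl p (pos (0, n) w ` Bset w))"

lemma finite_Bset: "finite (Bset w)" unfolding Bset_def by simp

lemma Aev_sets: "Aev p n m \<in> sets hail_space"
  unfolding Aev_def
  by (rule sets.finite_UN) (auto intro!: cyl_sets simp: finite_Words finite_Bset)

lemma Aev_measure:
  assumes p: "0 \<le> p" "p \<le> 1"
  shows "measure hail_space (Aev p n m) \<le> 12 ^ (n + m) * p ^ m"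
proof -
  interpret prob_space hail_space by (rule prob_hail)
  have "measure hail_space (Aev p n m) \<le> (\<Sum>w\<in>Words n m. measure hail_space (cyl p (pos (0, n) w ` Bset w)))"
    unfolding Aev_def
    by (rule finite_measure_subadditive_finite) (auto intro!: cyl_sets simp: finite_Words finite_Bset)
  also have "\<dots> \<le> (\<Sum>w\<in>Words n m. p ^ m)"
  proof (rule sum_mono)
    fix w assume w: "w \<in> Words n m"
    then have "card (pos (0, n) w ` Bset w) = card (Bset w)" "m \<le> card (Bset w)"
      unfolding Words_def by (auto simp: card_image)
    then show "measure hail_space (cyl p (pos (0, n) w ` Bset w)) \<le> p ^ m"
      using cyl_measure[of "pos (0, n) w ` Bset w" p] p finite_Bset
      by (simp add: power_decreasing)
  qed
  also have "\<dots> = real (card (Words n m)) * p ^ m" by simp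
  also have "\<dots> \<le> real ((n + m + 1) * 6 ^ (n + m)) * p ^ m"
    by (rule mult_right_mono) (use of_nat_mono[OF card_Words[of n m]] p in auto)
  also have "\<dots> \<le> real (2 ^ (n + m) * 6 ^ (n + m)) * p ^ m"
  proof -
    have "n + m < 2 ^ (n + m)" by (rule less_exp)
    then have "n + m + 1 \<le> 2 ^ (n + m)" by linarith
    then have "(n + m + 1) * 6 ^ (n + m) \<le> 2 ^ (n + m) * (6::nat) ^ (n + m)" by (rule mult_right_mono) simp
    then have "real ((n + m + 1) * 6 ^ (n + m)) \<le> real (2 ^ (n + m) * (6::nat) ^ (n + m))" by (rule of_nat_mono)
    then show ?thesis by (rule mult_right_mono) (use p in auto)
  qed
  also have "\<dots> = 12 ^ (n + m) * p ^ m" by (simp add: power_mult_distrib[symmetric])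
  finally show ?thesis .
qed

definition pK :: "nat \<Rightarrow> real" where "pK K = 1 / (12 * 24 ^ K)"

lemma pK_pos: "0 < pK K" unfolding pK_def by simp
lemma pK_le1: "pK K \<le> 1"
proof -
  have "(1::real) \<le> 24 ^ K" by simp
  then have "1 \<le> 12 * (24::real) ^ K" by linarith
  then show ?thesis unfolding pK_def by simp
qed

lemma bound_calc:
  assumes K: "1 \<le> K"
  shows "12 ^ (n + (n div K + 1)) * pK K ^ (n div K + 1) \<le> (1/2::real) ^ n"
proof -
  define m where "m = n div K + 1"
  have e: "n = K * (n div K) + n mod K" by (metis mult.commute div_mult_mod_eq)
  have "n mod K < K" using K by simp
  moreover have "K * m = K * (n div K) + K" unfolding m_def by simp
  ultimately have Km: "n \<le> K * m" using e by linarith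
  have "12 ^ (n + m) * pK K ^ m = (12::real) ^ n / 24 ^ (K * m)"
    by (simp add: pK_def power_add power_mult_distrib power_mult power_one_over)
  also have "\<dots> \<le> 12 ^ n / 24 ^ n"
    by (rule divide_left_mono) (use power_increasing[OF Km, of "24::real"] in auto)
  also have "\<dots> = (1/2) ^ n" by (simp add: power_divide[symmetric])
  finally show ?thesis unfolding m_def .
qed

lemma edge_mono: "p \<le> q \<Longrightarrow> hail_edge p \<omega> x y \<Longrightarrow> hail_edge q \<omega> x y"
  unfolding hail_edge_def black_def by auto

lemma path_mono: "p \<le> q \<Longrightarrow> hail_path p \<omega> xs \<Longrightarrow> hail_path q \<omega> xs"
  unfolding hail_path_def using edge_mono by blast

lemma height_mono: "p \<le> q \<Longrightarrow> path_height p \<omega> xs \<le> path_height q \<omega> xs"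
  unfolding path_height_def length_filter_conv_card
  by (rule card_mono) (auto simp: black_def)

lemma Hn_mono: assumes "p \<le> q" shows "Hn p \<omega> n \<le> Hn q \<omega> n"
  unfolding Hn_def Hmax_def
proof (rule SUP_least)
  fix xs assume xs: "xs \<in> {xs. hail_path p \<omega> xs \<and> xs ! 0 = (0, n)}"
  then have xs': "xs \<in> {xs. hail_path q \<omega> xs \<and> xs ! 0 = (0, n)}" using path_mono[OF assms] by auto
  have "enat (path_height p \<omega> xs) \<le> enat (path_height q \<omega> xs)" using height_mono[OF assms] by simp
  also have "\<dots> \<le> (SUP xs\<in>{xs. hail_path q \<omega> xs \<and> xs ! 0 = (0, n)}. enat (path_height q \<omega> xs))"
    by (rule SUP_upper[OF xs'])
  finally show "enat (path_height p \<omega> xs) \<le> \<dots>" .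
qed

lemma AE_K:
  assumes K: "1 \<le> K"
  shows "AE \<omega> in hail_space. eventually (\<lambda>n. Hn (pK K) \<omega> n \<le> enat (n div K)) sequentially"
proof -
  interpret prob_space hail_space by (rule prob_hail)
  let ?A = "\<lambda>n. Aev (pK K) n (n div K + 1)"
  have "AE \<omega> in hail_space. eventually (\<lambda>n. \<omega> \<in> space hail_space - ?A n) sequentially"
  proof (rule borel_cantelli_AE1)
    show "?A n \<in> sets hail_space" for n by (rule Aev_sets)
    show "emeasure hail_space (?A n) < \<infinity>" for n by (simp add: less_top[symmetric])
    show "summable (\<lambda>n. measure hail_space (?A n))"
    proof (rule summable_comparison_test'[where g = "\<lambda>n. (1/2::real) ^ n" and N = 0])
      show "summable (\<lambda>n. (1/2::real) ^ n)" by (rule summable_geometric) simp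
      fix n :: nat
      have "measure hail_space (?A n) \<le> 12 ^ (n + (n div K + 1)) * pK K ^ (n div K + 1)"
        by (rule Aev_measure) (use pK_pos[of K] pK_le1[of K] in auto)
      also have "\<dots> \<le> (1/2) ^ n" by (rule bound_calc[OF K])
      finally show "norm (measure hail_space (?A n)) \<le> (1/2) ^ n" by simp
    qed
  qed
  then show ?thesis
  proof (rule eventually_mono)
    fix \<omega> assume "eventually (\<lambda>n. \<omega> \<in> space hail_space - ?A n) sequentially"
    then show "eventually (\<lambda>n. Hn (pK K) \<omega> n \<le> enat (n div K)) sequentially"
    proof (rule eventually_mono)
      fix n assume "\<omega> \<in> space hail_space - ?A n"
      then have "Hn (pK K) \<omega> n \<le> enat (n div K + 1 - 1)"
        by (intro Hn_le) (auto simp: Aev_def)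
      then show "Hn (pK K) \<omega> n \<le> enat (n div K)" by simp
    qed
  qed
qed

lemma ratio_nonneg: "0 \<le> ereal_of_enat h / ereal (real n)"
  by (rule zero_le_divide_ereal) auto

lemma ratio_le:
  assumes n: "1 \<le> n" and K: "1 \<le> K" and h: "h \<le> enat (n div K)"
  shows "ereal_of_enat h / ereal (real n) \<le> ereal (1 / real K)"
proof -
  obtain a where a: "h = enat a" "a \<le> n div K" using h by (cases h) auto
  have "a * K \<le> n div K * K" using a by simp
  also have "\<dots> \<le> n" by simp
  finally have "real a * real K \<le> real n" by (simp flip: of_nat_mult)
  then have "real a / real n \<le> 1 / real K" using n K by (simp add: field_simps)
  then show ?thesis using a n by simp
qed

theorem lemma7:
  shows "AE \<omega> in hail_space.
    ((\<lambda>p. limsup (\<lambda>n. ereal_of_enat (Hn p \<omega> n) / ereal (real n))) \<longlongrightarrow> 0) (at_right 0)"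
proof -
  have "AE \<omega> in hail_space. \<forall>K. eventually (\<lambda>n. Hn (pK (Suc K)) \<omega> n \<le> enat (n div Suc K)) sequentially"
    unfolding AE_all_countable by (intro allI AE_K) simp
  then show ?thesis
  proof (rule eventually_mono)
    fix \<omega> assume H: "\<forall>K. eventually (\<lambda>n. Hn (pK (Suc K)) \<omega> n \<le> enat (n div Suc K)) sequentially"
    define f where "f = (\<lambda>p. limsup (\<lambda>n. ereal_of_enat (Hn p \<omega> n) / ereal (real n)))"
    have f0: "0 \<le> f p" for p unfolding f_def
      by (rule le_Limsup) (auto simp: ratio_nonneg)
    have fK: "f p \<le> ereal (1 / real (Suc K))" if p: "p \<le> pK (Suc K)" for p K
      unfolding f_def
    proof (rule Limsup_bounded)
      have ev1: "eventually (\<lambda>n. 1 \<le> n) sequentially" by (rule eventually_ge_at_top)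
      show "eventually (\<lambda>n. ereal_of_enat (Hn p \<omega> n) / ereal (real n) \<le> ereal (1 / real (Suc K))) sequentially"
        using H[rule_format, of K] ev1
      proof (rule eventually_elim2)
        fix n assume h: "Hn (pK (Suc K)) \<omega> n \<le> enat (n div Suc K)" and n: "1 \<le> n"
        have "Hn p \<omega> n \<le> enat (n div Suc K)" using Hn_mono[OF p, of \<omega> n] h by (rule order_trans)
        then show "ereal_of_enat (Hn p \<omega> n) / ereal (real n) \<le> ereal (1 / real (Suc K))"
          using ratio_le[OF n, of "Suc K"] by simp
      qed
    qed
    have "(f \<longlongrightarrow> 0) (at_right 0)"
    proof (rule order_tendstoI)
      fix a :: ereal assume "a < 0"
      then show "eventually (\<lambda>p. a < f p) (at_right 0)"
        using f0 by (intro always_eventually) (metis order_less_le_trans)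
    next
      fix b :: ereal assume b: "0 < b"
      obtain K where K: "ereal (1 / real (Suc K)) < b"
      proof (cases b)
        case (real r)
        then have "0 < r" using b by simp
        then obtain N where N: "N > 0" "inverse (real N) < r" using ex_inverse_of_nat_less by blast
        then have "Suc (N - 1) = N" by simp
        then show ?thesis using that[of "N - 1"] real N by (simp add: inverse_eq_divide)
      next
        case PInf then show ?thesis using that[of 0] by simp
      next
        case MInf then show ?thesis using b by simp
      qed
      show "eventually (\<lambda>p. f p < b) (at_right 0)"
        unfolding eventually_at_right_field
      proof (intro exI conjI allI impI)
        show "(0::real) < pK (Suc K)" by (rule pK_pos)
        fix y :: real assume "0 < y" "y < pK (Suc K)"
        then have "f y \<le> ereal (1 / real (Suc K))" by (intro fK) simp
        then show "f y < b" using K by (rule order_le_less_trans)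
      qed
    qed
    then show "((\<lambda>p. limsup (\<lambda>n. ereal_of_enat (Hn p \<omega> n) / ereal (real n))) \<longlongrightarrow> 0) (at_right 0)"
      unfolding f_def .
  qed
qed

end
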